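(* Let $n\ge3$, $D>0$, $T\ge1$ and $G_1,\dots,G_T>0$. Consider the following $T$-round game on $\mathcal{D}^n_{++}$ with the affine-invariant metric. In round $t$ the player chooses a real diagonal matrix $Y_t$ with $\|Y_t\|_F\le D/2$ (i.e. the point $p_t=e^{Y_t}\in\mathcal{N}_D:=\{e^Y: Y\text{ real diagonal},\ \|Y\|_F\le D/2\}$), then the adversary chooses a real diagonal matrix $X_t$ with $\|X_t\|_F\le G_t$, which defines the loss $f_t(p)=-\mathrm{tr}(X_t\log p)$ on $\mathcal{D}^n_{++}$. Let $$\mathcal{V}_T=\inf_{Y_1}\sup_{X_1}\cdots\inf_{Y_T}\sup_{X_T}\Big[\sum_{t=1}^Tf_t(p_t)-\inf_{p\in\mathcal{N}_D}\sum_{t=1}^Tf_t(p)\Big].$$ Then $\mathcal{V}_T=\frac D2\sqrt{\sum_{t=1}^TG_t^2}$. Moreover, the player strategy $$Y_t=\frac D2\cdot\frac{\sum_{s=1}^{t-1}X_s}{\sqrt{\big\|\sum_{s=1}^{t-1}X_s\big\|_F^2+\sum_{s=t}^TG_s^2}}$$ guarantees regret at most $\frac D2\sqrt{\sum_{t=1}^TG_t^2}$ against every adversary.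
   Context: $\mathcal{D}^n_{++}$ is the set of $n\times n$ diagonal matrices with positive diagonal entries, a submanifold of the SPD matrices with the affine-invariant metric $\langle U,V\rangle_p=\mathrm{tr}(p^{-1}Up^{-1}V)$; its tangent spaces are the real diagonal matrices, $\mathrm{Exp}_I(Y)=e^Y$, and the distance is $d(p,q)=\big(\sum_i(\log\lambda_i(q^{-1/2}pq^{-1/2}))^2\big)^{1/2}$, so $\mathcal{N}_D$ is the geodesic ball of radius $D/2$ about $I$. $\|\cdot\|_F$ is the Frobenius norm, $\log$ the matrix logarithm. Each loss $f_t$ is a nonnegative multiple (at most $G_t$) of a Busemann function and is gsc-convex with gradient norm at most $G_t$. Empty sums equal $0$. *)

theory Defs
  imports "HOL-Analysis.Analysis"
begin

text \<open>A real diagonal n x n matrix is represented by its diagonal, a vector in real^'n.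
  Points of D^n_{++} are diagonal matrices with positive diagonal entries.\<close>

type_synonym 'n diagm = "real ^ 'n"

definition diag_exp :: "'n::finite diagm \<Rightarrow> 'n diagm" where
  "diag_exp Y = (\<chi> i. exp (Y $ i))"

definition diag_log :: "'n::finite diagm \<Rightarrow> 'n diagm" where
  "diag_log p = (\<chi> i. ln (p $ i))"

definition tr_prod :: "'n::finite diagm \<Rightarrow> 'n diagm \<Rightarrow> real" where
  "tr_prod X Y = (\<Sum>i\<in>UNIV. X $ i * Y $ i)"

definition frob :: "'n::finite diagm \<Rightarrow> real" where
  "frob X = sqrt (\<Sum>i\<in>UNIV. (X $ i)^2)"

definition ND :: "real \<Rightarrow> 'n::finite diagm set" where
  "ND D = diag_exp ` {Y. frob Y \<le> D / 2}"

definition loss :: "'n::finite diagm \<Rightarrow> 'n diagm \<Rightarrow> real" where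
  "loss X p = - tr_prod X (diag_log p)"

definition regret :: "real \<Rightarrow> nat \<Rightarrow> (nat \<Rightarrow> 'n::finite diagm) \<Rightarrow> (nat \<Rightarrow> 'n diagm) \<Rightarrow> real" where
  "regret D T Y X =
     (\<Sum>t=1..T. loss (X t) (diag_exp (Y t)))
     - (INF p\<in>ND D. \<Sum>t=1..T. loss (X t) p)"

definition regret_hist :: "real \<Rightarrow> ('n::finite diagm \<times> 'n diagm) list \<Rightarrow> real" where
  "regret_hist D h = regret D (length h) (\<lambda>t. fst (h ! (t - 1))) (\<lambda>t. snd (h ! (t - 1)))"

fun game_val :: "real \<Rightarrow> (nat \<Rightarrow> real) \<Rightarrow> nat \<Rightarrow> ('n::finite diagm \<times> 'n diagm) list \<Rightarrow> ereal" where
  "game_val D G 0 h = ereal (regret_hist D h)"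
| "game_val D G (Suc k) h =
     (INF Y\<in>{Y. frob Y \<le> D / 2}. SUP X\<in>{X. frob X \<le> G (length h + 1)}.
        game_val D G k (h @ [(Y, X)]))"

definition strat :: "real \<Rightarrow> (nat \<Rightarrow> real) \<Rightarrow> nat \<Rightarrow> (nat \<Rightarrow> 'n::finite diagm) \<Rightarrow> nat \<Rightarrow> 'n diagm" where
  "strat D G T X t =
     (D / 2 / sqrt ((frob (\<Sum>s=1..<t. X s))^2 + (\<Sum>s=t..T. (G s)^2))) *\<^sub>R (\<Sum>s=1..<t. X s)"

end

theory Submission imports Defs begin

lemma frob_norm: "frob X = norm X"
  by (simp add: frob_def norm_vec_def L2_set_def)

lemma loss_exp: "loss X (diag_exp Y) = - inner X Y"
  by (simp add: loss_def tr_prod_def diag_log_def diag_exp_def inner_vec_def)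

lemma inf_lin:
  fixes S :: "real^'n"
  assumes r: "r \<ge> 0"
  shows "(INF Y\<in>{Y::real^'n. norm Y \<le> r}. - inner S Y) = - r * norm S"
proof -
  define Y0 where "Y0 = (if S = 0 then 0 else (r / norm S) *\<^sub>R S)"
  have Y0: "norm Y0 \<le> r" using r by (auto simp: Y0_def)
  have v: "- inner S Y0 = - r * norm S"
    by (auto simp: Y0_def power2_norm_eq_inner[symmetric] power2_eq_square)
  show ?thesis
    unfolding image_def[symmetric]
  proof (rule cInf_eq_minimum)
    show "- r * norm S \<in> (\<lambda>Y. - inner S Y) ` {Y. norm Y \<le> r}" using Y0 v by force
  next
    fix x assume "x \<in> (\<lambda>Y. - inner S Y) ` {Y. norm Y \<le> r}"
    then obtain Y where "norm Y \<le> r" "x = - inner S Y" by auto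
    moreover have "inner S Y \<le> norm S * norm Y" by (rule norm_cauchy_schwarz)
    moreover have "norm S * norm Y \<le> norm S * r" using \<open>norm Y \<le> r\<close> by (simp add: mult_left_mono)
    ultimately show "- r * norm S \<le> x" by (simp add: mult.commute)
  qed
qed

lemma inf_ND:
  assumes "D \<ge> 0"
  shows "(INF p\<in>ND D. \<Sum>t\<in>A. loss (X t) p) = - (D/2) * norm (\<Sum>t\<in>A. X t :: real^'n::finite)"
proof -
  have "(INF p\<in>ND D. \<Sum>t\<in>A. loss (X t) p) = (INF Y\<in>{Y::real^'n. norm Y \<le> D/2}. - inner (\<Sum>t\<in>A. X t) Y)"
    by (simp add: ND_def image_comp comp_def loss_exp frob_norm sum_negf inner_sum_left)
  also have "\<dots> = - (D/2) * norm (\<Sum>t\<in>A. X t)" using assms by (intro inf_lin) simp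
  finally show ?thesis .
qed

lemma regret_eq:
  assumes "D \<ge> 0"
  shows "regret D T Y X = (\<Sum>t=1..T. - inner (X t) (Y t)) + D/2 * norm (\<Sum>t=1..T. X t :: real^'n::finite)"
  unfolding regret_def loss_exp inf_ND[OF assms] by simp

lemma up_step:
  fixes S X :: "real^'n::finite"
  assumes r: "r \<ge> 0" and X: "norm X \<le> g" and C: "C \<ge> 0" and A: "0 < norm S ^2 + g^2 + C"
  shows "- inner X ((r / sqrt (norm S^2 + g^2 + C)) *\<^sub>R S) + r * sqrt (norm (S+X)^2 + C)
         \<le> r * sqrt (norm S^2 + g^2 + C)"
proof -
  define A where "A = sqrt (norm S^2 + g^2 + C)"
  define b where "b = inner X S"
  have Apos: "A > 0" using A by (simp add: A_def)
  have A2: "A^2 = norm S^2 + g^2 + C" using A by (simp add: A_def)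
  have g0: "g \<ge> 0" using X norm_ge_zero order_trans by blast
  have bb: "\<bar>b\<bar> \<le> norm X * norm S" unfolding b_def by (rule Cauchy_Schwarz_ineq2)
  have "norm X * norm S \<le> g * norm S" using X by (simp add: mult_right_mono)
  moreover have "2 * (g * norm S) \<le> g^2 + norm S^2"
  proof -
    have "0 \<le> (g - norm S)^2" by simp
    then show ?thesis by (simp add: power2_diff)
  qed
  moreover have "0 \<le> C" by (rule C)
  ultimately have bA: "\<bar>b\<bar> \<le> A^2" using bb A2
    zero_le_power2[of g] zero_le_power2[of "norm S"] by linarith
  have nsx: "norm (S+X)^2 = norm S^2 + 2*b + norm X^2"
    by (simp add: power2_norm_eq_inner inner_add b_def inner_commute algebra_simps)
  have X2: "norm X^2 \<le> g^2" using X by (simp add: power_mono)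
  have nonneg: "A + b/A \<ge> 0"
  proof -
    have "A^2 + b \<ge> 0" using bA by linarith
    then have "(A^2 + b)/A \<ge> 0" using Apos by simp
    moreover have "(A^2 + b)/A = A + b/A" using Apos by (simp add: field_simps power2_eq_square)
    ultimately show ?thesis by simp
  qed
  have sq: "(A + b/A)^2 = A^2 + 2*b + (b/A)^2" using Apos
    by (simp add: power2_eq_square field_simps)
  have "norm (S+X)^2 + C \<le> (A + b/A)^2" using nsx X2 A2 sq zero_le_power2[of "b/A"]
    by linarith
  then have "sqrt (norm (S+X)^2 + C) \<le> sqrt ((A + b/A)^2)" by (rule real_sqrt_le_mono)
  also have "\<dots> = A + b/A" using nonneg by simp
  finally have "sqrt (norm (S+X)^2 + C) \<le> A + b/A" .
  then have "r * sqrt (norm (S+X)^2 + C) \<le> r * (A + b/A)" using r by (simp add: mult_left_mono)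
  moreover have "inner X ((r / A) *\<^sub>R S) = r * (b/A)" by (simp add: b_def)
  ultimately show ?thesis unfolding A_def[symmetric] by (simp add: algebra_simps del: inner_scaleR_right)
qed

lemma low_step:
  fixes S Y :: "real^'n::finite"
  assumes n: "CARD('n) \<ge> 3" and r: "r \<ge> 0" and g: "g \<ge> 0"
  shows "\<exists>X. norm X \<le> g \<and> r * sqrt (norm S^2 + g^2 + C) \<le> - inner X Y + r * sqrt (norm (S+X)^2 + C)"
proof -
  have "dim {S, Y} \<le> card {S, Y}" by (rule dim_le_card') simp
  also have "\<dots> \<le> 2" by (simp add: card_insert_le_m1)
  finally have "dim {S, Y} < DIM(real^'n)" using n by simp
  then obtain x where x: "x \<noteq> 0" "\<And>y. y \<in> span {S,Y} \<Longrightarrow> orthogonal x y"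
    using orthogonal_to_subspace_exists by blast
  have xS: "inner x S = 0" and xY: "inner x Y = 0" using x(2)[of S] x(2)[of Y]
    by (auto simp: orthogonal_def span_base)
  define X where "X = (g / norm x) *\<^sub>R x"
  have nX: "norm X = g" using x g by (simp add: X_def)
  have "inner X S = 0" "inner X Y = 0" using xS xY by (auto simp: X_def)
  moreover have "inner X X = g^2" using nX by (simp add: power2_norm_eq_inner[symmetric])
  ultimately have "norm (S+X)^2 = norm S^2 + g^2"
    by (simp add: power2_norm_eq_inner inner_add inner_commute)
  then show ?thesis using nX \<open>inner X Y = 0\<close> by (intro exI[of _ X]) simp
qed


lemma sum_shift_list:
  fixes f :: "'a \<Rightarrow> 'b::comm_monoid_add"
  shows "(\<Sum>t=1..length h. f (h ! (t - 1))) = sum_list (map f h)"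
proof -
  have "(\<Sum>t=1..n. g (t - 1)) = (\<Sum>i<n. g i)" for n and g :: "nat \<Rightarrow> 'b::comm_monoid_add"
    by (induct n) (auto simp: add.commute)
  then show ?thesis by (simp add: sum_list_sum_nth atLeast0LessThan)
qed

definition Pay :: "('n::finite diagm \<times> 'n diagm) list \<Rightarrow> real" where
  "Pay h = sum_list (map (\<lambda>(Y,X). - inner X Y) h)"

definition Sm :: "('n::finite diagm \<times> 'n diagm) list \<Rightarrow> 'n diagm" where
  "Sm h = sum_list (map snd h)"

lemma regret_hist_eq:
  assumes "D \<ge> 0"
  shows "regret_hist D h = Pay h + D/2 * norm (Sm h)"
proof -
  have "(\<Sum>t=1..length h. - inner (snd (h ! (t - 1))) (fst (h ! (t - 1)))) = Pay h"
    using sum_shift_list[of "\<lambda>p. - inner (snd p) (fst p)" h]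
    by (simp add: Pay_def case_prod_unfold)
  moreover have "(\<Sum>t=1..length h. snd (h ! (t - 1))) = Sm h"
    using sum_shift_list[of snd h] by (simp add: Sm_def)
  ultimately show ?thesis unfolding regret_hist_def regret_eq[OF assms] by simp
qed

lemma sum_split_first:
  "(\<Sum>s\<in>{m<..m + Suc k}. f s) = f (Suc m) + (\<Sum>s\<in>{Suc m<..Suc m + k}. (f s :: real))"
proof -
  have "{m<..m + Suc k} = insert (Suc m) {Suc m<..Suc m + k}" by auto
  then show ?thesis by simp
qed

lemma game_claim:
  assumes n: "CARD('n::finite) \<ge> 3" and D: "D \<ge> 0"
  shows "(\<forall>t. length h < t \<and> t \<le> length h + k \<longrightarrow> G t > 0) \<Longrightarrow>
    game_val D G k (h :: ('n diagm \<times> 'n diagm) list) =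
      ereal (Pay h + D/2 * sqrt (norm (Sm h)^2 + (\<Sum>s\<in>{length h<..length h + k}. (G s)^2)))"
proof (induction k arbitrary: h)
  case 0
  then show ?case using regret_hist_eq[OF D] by simp
next
  case (Suc k)
  define r where "r = D/2"
  have r: "r \<ge> 0" using D by (simp add: r_def)
  define m where "m = length h"
  define g where "g = G (Suc m)"
  define C where "C = (\<Sum>s\<in>{Suc m<..Suc m + k}. (G s)^2)"
  define S where "S = Sm h"
  have gpos: "g > 0" using Suc.prems by (simp add: g_def m_def)
  have C0: "C \<ge> 0" by (simp add: C_def sum_nonneg)
  have IH: "game_val D G k (h @ [(Y, X)]) =
      ereal (Pay h - inner X Y + r * sqrt (norm (S + X)^2 + C))" for Y X
  proof -
    have "game_val D G k (h @ [(Y, X)]) = ereal (Pay (h @ [(Y, X)]) + D/2 * sqrt (norm (Sm (h @ [(Y, X)]))^2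
        + (\<Sum>s\<in>{length (h @ [(Y, X)])<..length (h @ [(Y, X)]) + k}. (G s)^2)))"
      using Suc.prems by (intro Suc.IH) auto
    then show ?thesis by (simp add: Pay_def Sm_def S_def C_def r_def m_def)
  qed
  have tot: "(\<Sum>s\<in>{length h<..length h + Suc k}. (G s)^2) = g^2 + C"
    unfolding m_def[symmetric] g_def C_def by (rule sum_split_first)
  define V where "V = Pay h + r * sqrt (norm S^2 + g^2 + C)"
  have goal: "game_val D G (Suc k) h = ereal V"
  proof (rule antisym)
    define A where "A = sqrt (norm S^2 + g^2 + C)"
    have Apos: "0 < norm S ^2 + g^2 + C" using gpos C0 by (simp add: add_nonneg_pos add_pos_nonneg)
    have AA: "A > 0" using Apos by (simp add: A_def)
    have "norm S = sqrt (norm S^2)" by simp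
    also have "\<dots> \<le> A" unfolding A_def using C0 by (intro real_sqrt_le_mono) simp
    finally have nSA: "norm S \<le> A" .
    have "frob ((r / A) *\<^sub>R S) = r * (norm S / A)" using r AA by (simp add: frob_norm)
    also have "\<dots> \<le> r * 1" using nSA AA r by (intro mult_left_mono) simp_all
    finally have Y0: "(r / A) *\<^sub>R S \<in> {Y. frob Y \<le> D/2}" by (simp add: r_def)
    have "(SUP X\<in>{X. frob X \<le> G (length h + 1)}. game_val D G k (h @ [((r / A) *\<^sub>R S, X)])) \<le> ereal V"
    proof (rule SUP_least)
      fix X :: "'n diagm" assume "X \<in> {X. frob X \<le> G (length h + 1)}"
      then have "norm X \<le> g" by (simp add: frob_norm g_def m_def)
      have "- inner X ((r / A) *\<^sub>R S) + r * sqrt (norm (S+X)^2 + C) \<le> r * A"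
        unfolding A_def using r \<open>norm X \<le> g\<close> C0 Apos by (rule up_step)
      then show "game_val D G k (h @ [((r / A) *\<^sub>R S, X)]) \<le> ereal V"
        unfolding IH V_def A_def by simp
    qed
    then show "game_val D G (Suc k) h \<le> ereal V"
      unfolding game_val.simps by (rule INF_lower2[OF Y0])
  next
    show "ereal V \<le> game_val D G (Suc k) h"
      unfolding game_val.simps
    proof (rule INF_greatest)
      fix Y :: "'n diagm" assume "Y \<in> {Y. frob Y \<le> D / 2}"
      obtain X where X: "norm X \<le> g"
        "r * sqrt (norm S^2 + g^2 + C) \<le> - inner X Y + r * sqrt (norm (S+X)^2 + C)"
        using low_step[OF n r, of g S C Y] gpos by auto
      show "ereal V \<le> (SUP X\<in>{X. frob X \<le> G (length h + 1)}. game_val D G k (h @ [(Y, X)]))"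
        apply (rule SUP_upper2[of X])
        using X by (auto simp: frob_norm g_def m_def IH V_def)
    qed
  qed
  then show ?case using tot by (simp add: V_def r_def S_def add.assoc)
qed


theorem mainTheorem4:
  fixes D :: real and T :: nat and G :: "nat \<Rightarrow> real"
  assumes n3: "CARD('n::finite) \<ge> 3"
    and D: "D > 0" and T: "T \<ge> 1"
    and G: "\<And>t. t \<in> {1..T} \<Longrightarrow> G t > 0"
  shows "(game_val D G T ([] :: ('n diagm \<times> 'n diagm) list)
            = ereal (D / 2 * sqrt (\<Sum>t=1..T. (G t)^2)))
       \<and> (\<forall>X :: nat \<Rightarrow> 'n diagm. (\<forall>t\<in>{1..T}. frob (X t) \<le> G t) \<longrightarrow>
            (\<forall>t\<in>{1..T}. frob (strat D G T X t) \<le> D / 2)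
            \<and> regret D T (strat D G T X) X \<le> D / 2 * sqrt (\<Sum>t=1..T. (G t)^2))"
proof (intro conjI allI impI)
  have D0: "D \<ge> 0" using D by simp
  have "game_val D G T ([] :: ('n diagm \<times> 'n diagm) list) =
      ereal (Pay ([] :: ('n diagm \<times> 'n diagm) list) + D/2 * sqrt (norm (Sm ([] :: ('n diagm \<times> 'n diagm) list))^2
        + (\<Sum>s\<in>{length ([] :: ('n diagm \<times> 'n diagm) list)<..length ([] :: ('n diagm \<times> 'n diagm) list) + T}. (G s)^2)))"
    using G by (intro game_claim[OF n3 D0]) auto
  moreover have "{0<..T} = {1..T}" by auto
  ultimately show "game_val D G T ([] :: ('n diagm \<times> 'n diagm) list)
            = ereal (D / 2 * sqrt (\<Sum>t=1..T. (G t)^2))"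
    by (simp add: Pay_def Sm_def)
next
  fix X :: "nat \<Rightarrow> 'n diagm"
  assume XG: "\<forall>t\<in>{1..T}. frob (X t) \<le> G t"
  have D0: "D \<ge> 0" using D by simp
  define r where "r = D/2"
  have r: "r \<ge> 0" using D by (simp add: r_def)
  define Y where "Y = strat D G T X"
  have Yeq: "Y t = (r / sqrt ((norm (\<Sum>s=1..<t. X s))^2 + (\<Sum>s=t..T. (G s)^2))) *\<^sub>R (\<Sum>s=1..<t. X s)" for t
    by (simp add: Y_def strat_def r_def frob_norm)
  show "\<forall>t\<in>{1..T}. frob (strat D G T X t) \<le> D / 2"
  proof
    fix t assume t: "t \<in> {1..T}"
    define S where "S = (\<Sum>s=1..<t. X s)"
    define A where "A = sqrt ((norm S)^2 + (\<Sum>s=t..T. (G s)^2))"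
    have "(\<Sum>s=t..T. (G s)^2) \<ge> (G t)^2"
      using t by (intro member_le_sum) auto
    moreover have "(G t)^2 > 0" using G[OF t] by simp
    ultimately have c: "(\<Sum>s=t..T. (G s)^2) > 0" by linarith
    have AA: "A > 0" unfolding A_def using c by (simp add: add_nonneg_pos)
    have "norm S = sqrt (norm S^2)" by simp
    also have "\<dots> \<le> A" unfolding A_def using c by (intro real_sqrt_le_mono) simp
    finally have nSA: "norm S \<le> A" .
    have st: "strat D G T X t = (r / A) *\<^sub>R S"
      using Yeq[of t] unfolding Y_def S_def A_def by simp
    have "frob (strat D G T X t) = r * (norm S / A)"
      unfolding st frob_norm using r AA by simp
    also have "\<dots> \<le> r * 1" using nSA AA r by (intro mult_left_mono) simp_all
    finally show "frob (strat D G T X t) \<le> D / 2" by (simp add: r_def)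
  qed
  define Phi where "Phi t = (\<Sum>s=1..t. - inner (X s) (Y s))
      + r * sqrt ((norm (\<Sum>s=1..t. X s))^2 + (\<Sum>s=Suc t..T. (G s)^2))" for t
  have step: "Phi (Suc t) \<le> Phi t" if tT: "Suc t \<le> T" for t
  proof -
    define S where "S = (\<Sum>s=1..t. X s)"
    define g where "g = G (Suc t)"
    define C where "C = (\<Sum>s=Suc (Suc t)..T. (G s)^2)"
    have gpos: "g > 0" unfolding g_def using G tT by auto
    have C0: "C \<ge> 0" by (simp add: C_def sum_nonneg)
    have Xg: "norm (X (Suc t)) \<le> g" using XG tT by (auto simp: g_def frob_norm)
    have split: "(\<Sum>s=Suc t..T. (G s)^2) = g^2 + C"
      unfolding g_def C_def using tT by (simp add: sum.atLeast_Suc_atMost)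
    have Apos: "0 < norm S ^2 + g^2 + C" using gpos C0 by (simp add: add_nonneg_pos add_pos_nonneg)
    have YS: "Y (Suc t) = (r / sqrt (norm S^2 + g^2 + C)) *\<^sub>R S"
      unfolding Yeq S_def using split by (simp add: atLeastLessThanSuc_atLeastAtMost add.assoc)
    have u: "- inner (X (Suc t)) ((r / sqrt (norm S^2 + g^2 + C)) *\<^sub>R S)
        + r * sqrt (norm (S + X (Suc t))^2 + C) \<le> r * sqrt (norm S^2 + g^2 + C)"
      using r Xg C0 Apos by (rule up_step)
    have "Phi (Suc t) = (\<Sum>s=1..t. - inner (X s) (Y s)) - inner (X (Suc t)) (Y (Suc t))
       + r * sqrt (norm (S + X (Suc t))^2 + C)"
      by (simp add: Phi_def S_def C_def)
    also have "\<dots> \<le> (\<Sum>s=1..t. - inner (X s) (Y s)) + r * sqrt (norm S^2 + g^2 + C)"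
      using u unfolding YS by simp
    also have "\<dots> = Phi t" by (simp add: Phi_def S_def split add.assoc)
    finally show ?thesis .
  qed
  have mono: "t \<le> T \<Longrightarrow> Phi t \<le> Phi 0" for t
  proof (induction t)
    case 0 then show ?case by simp
  next
    case (Suc t) then show ?case using step[of t] by simp
  qed
  have "regret D T Y X = Phi T"
    by (simp add: regret_eq[OF D0] Phi_def r_def)
  also have "\<dots> \<le> Phi 0" by (rule mono) simp
  also have "\<dots> = D / 2 * sqrt (\<Sum>t=1..T. (G t)^2)" by (simp add: Phi_def r_def)
  finally show "regret D T (strat D G T X) X \<le> D / 2 * sqrt (\<Sum>t=1..T. (G t)^2)"
    by (simp add: Y_def)
qed

end
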